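(* Let $d\geq 2$, let $\mathsf{B}$ be a stacked $(d+1)$-ball on $n$ vertices and let $\mathsf{K}=\partial\mathsf{B}$. Then $\tau(\mathcal{F}(\mathsf{B}))\leq \frac{1}{d+2}n$ and $\tau(\mathcal{F}(\mathsf{K}))\leq \frac{2}{d+2}n$. Furthermore, $\mathcal{F}(\mathsf{B})$ and $\mathcal{F}(\mathsf{K})$ are both $2$-colorable.
   Context: An abstract $m$-simplex $\Delta(V)$ is the set of all subsets of a set $V$ of size $m+1$. A simplicial complex $\mathsf{B}$ is a stacked $(d+1)$-ball if there are abstract $(d+1)$-simplices $\Delta_1,\dots,\Delta_m$ with $\mathsf{B}=\bigcup_{i=1}^m\Delta_i$ such that, writing $\mathsf{B}_k=\bigcup_{i=1}^k\Delta_i$, for every $1\leq k\leq m-1$ the intersection $\mathsf{B}_k\cap\Delta_{k+1}$ is an abstract $d$-simplex whose maximal face is a $d$-dimensional face of both $\partial\mathsf{B}_k$ and $\Delta_{k+1}$. The boundary $\partial\mathsf{B}$ of such a ball is the subcomplex generated by the $d$-dimensional faces contained in exactly one $(d+1)$-simplex $\Delta_i$. $\mathcal{F}(\cdot)$ is the hypergraph of facets (inclusion-maximal faces); $\tau$ is the minimum size of a vertex set meeting every hyperedge; $2$-colorable means the vertices can be $2$-colored with no monochromatic hyperedge. *)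

theory Defs
  imports Complex_Main
begin

definition simplex :: "'a set \<Rightarrow> 'a set set" where
  "simplex V = Pow V"

definition partial_ball :: "'a set list \<Rightarrow> nat \<Rightarrow> 'a set set" where
  "partial_ball Vs k = (\<Union>i\<in>{..<k}. simplex (Vs ! i))"

definition boundary_faces :: "nat \<Rightarrow> 'a set list \<Rightarrow> nat \<Rightarrow> 'a set set" where
  "boundary_faces d Vs k =
     {\<sigma>. \<sigma> \<in> partial_ball Vs k \<and> finite \<sigma> \<and> card \<sigma> = d + 1 \<and>
          card {i. i < k \<and> \<sigma> \<subseteq> Vs ! i} = 1}"

definition boundary :: "nat \<Rightarrow> 'a set list \<Rightarrow> nat \<Rightarrow> 'a set set" where
  "boundary d Vs k = (\<Union>\<sigma>\<in>boundary_faces d Vs k. simplex \<sigma>)"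

text \<open>The list Vs of vertex sets of (d+1)-simplices Delta_1,...,Delta_m is a stacking
  sequence of a stacked (d+1)-ball (0-indexed: Delta_(k+1) = Vs ! k).\<close>
definition stacked_ball_seq :: "nat \<Rightarrow> 'a set list \<Rightarrow> bool" where
  "stacked_ball_seq d Vs \<longleftrightarrow>
     Vs \<noteq> [] \<and>
     (\<forall>V\<in>set Vs. finite V \<and> card V = d + 2) \<and>
     (\<forall>k. 1 \<le> k \<and> k < length Vs \<longrightarrow>
        (\<exists>W. finite W \<and> card W = d + 1 \<and>
             partial_ball Vs k \<inter> simplex (Vs ! k) = simplex W \<and>
             W \<in> boundary d Vs k \<and> W \<subseteq> Vs ! k))"

definition facets :: "'a set set \<Rightarrow> 'a set set" where
  "facets C = {F \<in> C. \<forall>G\<in>C. F \<subseteq> G \<longrightarrow> G = F}"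

definition tau :: "'a set set \<Rightarrow> nat" where
  "tau H = (LEAST k. \<exists>T. finite T \<and> card T = k \<and> (\<forall>e\<in>H. T \<inter> e \<noteq> {}))"

definition two_colorable :: "'a set set \<Rightarrow> bool" where
  "two_colorable H \<longleftrightarrow> (\<exists>c :: 'a \<Rightarrow> bool. \<forall>e\<in>H. \<exists>x\<in>e. \<exists>y\<in>e. c x \<noteq> c y)"

end

theory Submission
  imports Defs
begin

lemma avg_exists:
  fixes f :: "nat \<Rightarrow> nat"
  assumes "finite S" "S \<noteq> {}"
  shows "\<exists>j\<in>S. card S * f j \<le> sum f S"
proof (rule ccontr)
  assume "\<not> ?thesis"
  hence h: "\<And>j. j \<in> S \<Longrightarrow> sum f S < card S * f j" by (simp add: not_le)
  have "card S * sum f S = (\<Sum>j\<in>S. sum f S)" by simp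
  also have "\<dots> < (\<Sum>j\<in>S. card S * f j)"
    by (rule sum_strict_mono[OF assms]) (use h in auto)
  also have "\<dots> = card S * sum f S" by (simp add: sum_distrib_left)
  finally show False by simp
qed

lemma inter_nonempty:
  fixes X A :: "nat set"
  assumes "X \<subseteq> {..<N}" "A \<subseteq> {..<N}" "card X + card A > N"
  shows "X \<inter> A \<noteq> {}"
proof
  assume e: "X \<inter> A = {}"
  have fX: "finite X" "finite A" using assms finite_subset by blast+
  have "card (X \<union> A) = card X + card A" using card_Un_disjoint[OF fX e] .
  moreover have "card (X \<union> A) \<le> N"
    using card_mono[of "{..<N}" "X \<union> A"] assms by auto
  ultimately show False using assms by simp
qed

lemma step_facts:
  assumes "stacked_ball_seq d Vs" "1 \<le> k" "k < length Vs"
  shows "\<exists>W. card W = d + 1 \<and> W \<subseteq> Vs ! k \<and> (\<exists>j<k. W \<subseteq> Vs ! j)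
     \<and> (\<forall>x\<in>Vs ! k. (\<exists>i<k. x \<in> Vs ! i) \<longrightarrow> x \<in> W)"
proof -
  obtain W where W: "finite W" "card W = d + 1"
    "partial_ball Vs k \<inter> simplex (Vs ! k) = simplex W" "W \<subseteq> Vs ! k"
    using assms unfolding stacked_ball_seq_def by blast
  have "W \<in> partial_ball Vs k" using W(3) unfolding simplex_def by blast
  then obtain j where "j < k" "W \<subseteq> Vs ! j" unfolding partial_ball_def simplex_def by auto
  moreover have "\<forall>x\<in>Vs ! k. (\<exists>i<k. x \<in> Vs ! i) \<longrightarrow> x \<in> W"
  proof (intro ballI impI)
    fix x assume x: "x \<in> Vs ! k" "\<exists>i<k. x \<in> Vs ! i"
    hence "{x} \<in> partial_ball Vs k \<inter> simplex (Vs ! k)"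
      unfolding partial_ball_def simplex_def by auto
    thus "x \<in> W" using W(3) unfolding simplex_def by auto
  qed
  ultimately show ?thesis using W by blast
qed

lemma coloring:
  assumes sb: "stacked_ball_seq d Vs"
  shows "1 \<le> k \<Longrightarrow> k \<le> length Vs \<Longrightarrow>
    \<exists>c :: 'a \<Rightarrow> nat. \<forall>i<k. inj_on c (Vs ! i) \<and> c ` (Vs ! i) \<subseteq> {..<d+2}"
proof (induction k)
  case 0 then show ?case by simp
next
  case (Suc k)
  have card: "\<And>i. i < length Vs \<Longrightarrow> finite (Vs ! i) \<and> card (Vs ! i) = d + 2"
    using sb nth_mem unfolding stacked_ball_seq_def by blast
  show ?case
  proof (cases "k = 0")
    case True
    with Suc have "0 < length Vs" by linarith
    with card obtain h where h: "bij_betw h (Vs ! 0) {0..<d+2}"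
      using ex_bij_betw_finite_nat by metis
    hence "inj_on h (Vs ! 0) \<and> h ` (Vs ! 0) \<subseteq> {..<d+2}"
      unfolding bij_betw_def by auto
    then show ?thesis using True by (intro exI[of _ h]) auto
  next
    case False
    with Suc obtain c where c: "\<forall>i<k. inj_on c (Vs ! i) \<and> c ` (Vs ! i) \<subseteq> {..<d+2}"
      by auto
    have kl: "k < length Vs" using Suc by simp
    obtain W j where W: "card W = d + 1" "W \<subseteq> Vs ! k" "j < k" "W \<subseteq> Vs ! j"
      "\<forall>x\<in>Vs ! k. (\<exists>i<k. x \<in> Vs ! i) \<longrightarrow> x \<in> W"
      using step_facts[OF sb _ kl] False by auto
    have injW: "inj_on c W" using c W(3,4) inj_on_subset by blast
    have imW: "c ` W \<subseteq> {..<d+2}" using c W(3,4) by blast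
    have "card (c ` W) = d + 1" using card_image[OF injW] W(1) by simp
    hence "c ` W \<noteq> {..<d+2}" by auto
    then obtain col where col: "col < d + 2" "col \<notin> c ` W" using imW by auto
    have fk: "finite (Vs ! k)" "card (Vs ! k) = d + 2" using card kl by auto
    have "card (Vs ! k - W) = 1"
      using card_Diff_subset[of W "Vs ! k"] W fk finite_subset by fastforce
    then obtain v where v: "Vs ! k - W = {v}" using card_1_singletonE by blast
    define c' where "c' = c(v := col)"
    have vk: "Vs ! k = insert v W" "v \<notin> W" using v W(2) by auto
    have "\<forall>i<Suc k. inj_on c' (Vs ! i) \<and> c' ` (Vs ! i) \<subseteq> {..<d+2}"
    proof (intro allI impI)
      fix i assume i: "i < Suc k"
      show "inj_on c' (Vs ! i) \<and> c' ` (Vs ! i) \<subseteq> {..<d+2}"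
      proof (cases "i < k")
        case True
        have "v \<notin> Vs ! i" using W(5) vk True by auto
        hence "\<forall>x\<in>Vs ! i. c' x = c x" unfolding c'_def by auto
        hence "inj_on c' (Vs ! i) = inj_on c (Vs ! i)" "c' ` (Vs ! i) = c ` (Vs ! i)"
          by (simp_all add: inj_on_def)
        then show ?thesis using c True by simp
      next
        case False
        hence ik: "i = k" using i by simp
        have eqW: "\<forall>x\<in>W. c' x = c x" unfolding c'_def using vk by auto
        have "inj_on c' W" using injW eqW by (simp add: inj_on_def)
        moreover have imeq: "c' ` W = c ` W" using eqW by (simp add: image_def)
        moreover have cv: "c' v = col" unfolding c'_def by simp
        ultimately have "inj_on c' (insert v W)" using col(2) vk(2) by simp
        moreover have "c' ` (insert v W) \<subseteq> {..<d+2}" using imeq cv imW col(1) by simp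
        ultimately show ?thesis using ik vk by simp
      qed
    qed
    then show ?thesis by blast
  qed
qed


lemma tau_le:
  assumes "finite T" "\<forall>e\<in>H. T \<inter> e \<noteq> {}"
  shows "tau H \<le> card T"
  unfolding tau_def by (rule Least_le) (use assms in blast)

lemma arith2:
  fixes a b n d :: nat
  assumes "(d+2) * a \<le> n" "(d+1) * b + a \<le> n"
  shows "(d+2) * (a + b) \<le> 2 * n"
proof -
  have "(d+1) * ((d+2) * (a+b)) = (d+2) * ((d+1) * b) + (d+1)*(d+2)*a"
    by (simp add: algebra_simps)
  also have "\<dots> \<le> (d+2) * (n - a) + (d+1)*(d+2)*a"
  proof -
    have "(d+1) * b \<le> n - a" using assms(2) by simp
    hence "(d+2) * ((d+1) * b) \<le> (d+2) * (n - a)" by (rule mult_le_mono2)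
    thus ?thesis by simp
  qed
  also have "\<dots> = (d+2) * n + d * ((d+2) * a)"
    using assms by (simp add: algebra_simps diff_mult_distrib2)
  also have "\<dots> \<le> (d+2) * n + d * n" using assms(1) by simp
  also have "\<dots> = (d+1) * (2 * n)" by (simp add: algebra_simps)
  finally have "(d+1) * ((d+2) * (a+b)) \<le> (d+1) * (2 * n)" .
  thus ?thesis by (simp only: mult_le_cancel1)
qed

theorem proposition3p2:
  fixes d n :: nat and Vs :: "'a set list" and B K :: "'a set set"
  assumes "d \<ge> 2"
    and "stacked_ball_seq d Vs"
    and "B = partial_ball Vs (length Vs)"
    and "K = boundary d Vs (length Vs)"
    and "n = card (\<Union>B)"
  shows "real (tau (facets B)) \<le> real n / real (d + 2)
       \<and> real (tau (facets K)) \<le> 2 * real n / real (d + 2)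
       \<and> two_colorable (facets B) \<and> two_colorable (facets K)"
proof -
  define m where "m = length Vs"
  have m1: "1 \<le> m" using assms(2) unfolding stacked_ball_seq_def m_def
    by (cases Vs) auto
  have card: "\<And>i. i < m \<Longrightarrow> finite (Vs ! i) \<and> card (Vs ! i) = d + 2"
    using assms(2) nth_mem unfolding stacked_ball_seq_def m_def by blast
  obtain c :: "'a \<Rightarrow> nat" where c: "\<forall>i<m. inj_on c (Vs ! i) \<and> c ` (Vs ! i) \<subseteq> {..<d+2}"
    using coloring[OF assms(2) m1] m_def by auto
  define U where "U = \<Union>B"
  have Ueq: "U = (\<Union>i<m. Vs ! i)"
    unfolding U_def assms(3) partial_ball_def simplex_def m_def by auto
  have finU: "finite U" unfolding Ueq using card by auto
  have nU: "n = card U" using assms(5) U_def by simp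
  have facB: "\<And>e. e \<in> facets B \<Longrightarrow> \<exists>i<m. e = Vs ! i"
  proof -
    fix e assume e: "e \<in> facets B"
    hence "e \<in> B" unfolding facets_def by auto
    then obtain i where i: "i < m" "e \<subseteq> Vs ! i"
      unfolding assms(3) partial_ball_def simplex_def m_def by auto
    have "Vs ! i \<in> B" using i unfolding assms(3) partial_ball_def simplex_def m_def by auto
    thus "\<exists>i<m. e = Vs ! i" using e i unfolding facets_def by auto
  qed
  have facK: "\<And>e. e \<in> facets K \<Longrightarrow> \<exists>i<m. e \<subseteq> Vs ! i \<and> finite e \<and> card e = d + 1"
  proof -
    fix e assume e: "e \<in> facets K"
    hence "e \<in> K" unfolding facets_def by auto
    then obtain \<sigma> where s: "\<sigma> \<in> boundary_faces d Vs m" "e \<subseteq> \<sigma>"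
      unfolding assms(4) boundary_def simplex_def m_def by auto
    have "\<sigma> \<in> K" using s unfolding assms(4) boundary_def simplex_def m_def by auto
    hence "e = \<sigma>" using e s unfolding facets_def by auto
    moreover obtain i where "i < m" "\<sigma> \<subseteq> Vs ! i"
      using s(1) unfolding boundary_faces_def partial_ball_def simplex_def by auto
    ultimately show "\<exists>i<m. e \<subseteq> Vs ! i \<and> finite e \<and> card e = d + 1"
      using s(1) unfolding boundary_faces_def by auto
  qed
  have hit: "\<And>e A. (\<exists>i<m. e \<subseteq> Vs ! i \<and> finite e \<and> card e \<ge> d + 1) \<Longrightarrow>
      A \<subseteq> {..<d+2} \<Longrightarrow> card e + card A > d + 2 \<Longrightarrow> \<exists>x\<in>e. c x \<in> A"
  proof -
    fix e A assume e: "\<exists>i<m. e \<subseteq> Vs ! i \<and> finite e \<and> card e \<ge> d + 1"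
      and A: "A \<subseteq> {..<d+2}" "card e + card A > d + 2"
    then obtain i where i: "i < m" "e \<subseteq> Vs ! i" "finite e" by auto
    have inj: "inj_on c e" using c i inj_on_subset by blast
    have im: "c ` e \<subseteq> {..<d+2}" using c i by blast
    have "card (c ` e) = card e" using card_image[OF inj] .
    hence "c ` e \<inter> A \<noteq> {}" using inter_nonempty[OF im A(1)] A(2) by simp
    thus "\<exists>x\<in>e. c x \<in> A" by auto
  qed
  have eU: "\<And>e. (\<exists>i<m. e \<subseteq> Vs ! i) \<Longrightarrow> e \<subseteq> U" unfolding Ueq by auto
  have hitB: "\<And>e A. e \<in> facets B \<Longrightarrow> A \<subseteq> {..<d+2} \<Longrightarrow> card A \<ge> 1 \<Longrightarrow> \<exists>x\<in>e. c x \<in> A"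
  proof -
    fix e A assume "e \<in> facets B" "A \<subseteq> {..<d+2}" "card A \<ge> 1"
    then obtain i where "i < m" "e = Vs ! i" using facB by blast
    thus "\<exists>x\<in>e. c x \<in> A" using hit[of e A] card \<open>A \<subseteq> _\<close> \<open>card A \<ge> 1\<close> by auto
  qed
  have hitK: "\<And>e A. e \<in> facets K \<Longrightarrow> A \<subseteq> {..<d+2} \<Longrightarrow> card A \<ge> 2 \<Longrightarrow> \<exists>x\<in>e. c x \<in> A"
  proof -
    fix e A assume "e \<in> facets K" "A \<subseteq> {..<d+2}" "card A \<ge> 2"
    then obtain i where "i < m" "e \<subseteq> Vs ! i" "finite e" "card e = d + 1" using facK by blast
    thus "\<exists>x\<in>e. c x \<in> A" using hit[of e A] \<open>A \<subseteq> _\<close> \<open>card A \<ge> 2\<close> by auto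
  qed
  define Cl where "Cl j = {x\<in>U. c x = j}" for j
  have cU: "\<And>x. x \<in> U \<Longrightarrow> c x < d + 2" using c unfolding Ueq by blast
  have Usplit: "U = (\<Union>j\<in>{..<d+2}. Cl j)" unfolding Cl_def using cU by auto
  have sumCl: "\<And>S. S \<subseteq> {..<d+2} \<Longrightarrow> (\<Sum>j\<in>S. card (Cl j)) = card (\<Union>j\<in>S. Cl j)"
    by (rule card_UN_disjoint[symmetric]) (auto simp: Cl_def finU finite_subset)
  have sumAll: "(\<Sum>j\<in>{..<d+2}. card (Cl j)) = n" using sumCl[of "{..<d+2}"] Usplit nU by simp
  obtain j1 where j1: "j1 < d + 2" "(d+2) * card (Cl j1) \<le> n"
    using avg_exists[of "{..<d+2}" "\<lambda>j. card (Cl j)"] sumAll by auto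
  have "(\<Sum>j\<in>{..<d+2}-{j1}. card (Cl j)) + card (Cl j1) = n"
    using sum.remove[of "{..<d+2}" j1 "\<lambda>j. card (Cl j)"] j1 sumAll by simp
  moreover obtain j2 where j2: "j2 \<in> {..<d+2}-{j1}"
    "card ({..<d+2}-{j1}) * card (Cl j2) \<le> (\<Sum>j\<in>{..<d+2}-{j1}. card (Cl j))"
  proof -
    have "finite ({..<d+2}-{j1})" by simp
    moreover have "(if j1 = 0 then 1 else 0) \<in> {..<d+2}-{j1}" by auto
    hence "({..<d+2}-{j1}) \<noteq> {}" by blast
    ultimately show ?thesis using that avg_exists[of "{..<d+2}-{j1}" "\<lambda>j. card (Cl j)"] by blast
  qed
  moreover have "card ({..<d+2}-{j1}) = d + 1" using j1 by simp
  ultimately have j2': "(d+1) * card (Cl j2) + card (Cl j1) \<le> n" by simp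
  have finCl: "\<And>j. finite (Cl j)" unfolding Cl_def using finU by simp
  have CU: "\<And>j. Cl j \<subseteq> U" unfolding Cl_def by auto
  have tB: "tau (facets B) \<le> card (Cl j1)"
  proof (rule tau_le[OF finCl], intro ballI)
    fix e assume e: "e \<in> facets B"
    then obtain x where "x \<in> e" "c x \<in> {j1}" using hitB[of e "{j1}"] j1 by auto
    moreover have "e \<subseteq> U" using facB[OF e] eU by blast
    ultimately show "Cl j1 \<inter> e \<noteq> {}" unfolding Cl_def by auto
  qed
  have tK: "tau (facets K) \<le> card (Cl j1 \<union> Cl j2)"
  proof (rule tau_le, simp add: finCl, intro ballI)
    fix e assume e: "e \<in> facets K"
    have "{j1, j2} \<subseteq> {..<d+2}" "card {j1, j2} \<ge> 2" using j1 j2 by auto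
    then obtain x where "x \<in> e" "c x \<in> {j1, j2}" using hitK[OF e] by blast
    moreover have "e \<subseteq> U" using facK[OF e] eU by blast
    ultimately show "(Cl j1 \<union> Cl j2) \<inter> e \<noteq> {}" unfolding Cl_def by auto
  qed
  have "card (Cl j1 \<union> Cl j2) \<le> card (Cl j1) + card (Cl j2)" by (rule card_Un_le)
  hence "tau (facets K) \<le> card (Cl j1) + card (Cl j2)" using tK by (rule le_trans[rotated])
  hence "(d+2) * tau (facets K) \<le> (d+2) * (card (Cl j1) + card (Cl j2))" by (rule mult_le_mono2)
  hence tK': "(d+2) * tau (facets K) \<le> 2 * n" using arith2[OF j1(2) j2'] by (rule le_trans)
  have "(d+2) * tau (facets B) \<le> (d+2) * card (Cl j1)" using tB by (rule mult_le_mono2)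
  hence tB': "(d+2) * tau (facets B) \<le> n" using j1(2) by (rule le_trans)
  have pos: "0 < real (d + 2)" by simp
  have "real ((d+2) * tau (facets B)) \<le> real n" using tB' by (simp only: of_nat_le_iff)
  hence "real (tau (facets B)) * real (d + 2) \<le> real n" by (simp only: of_nat_mult mult.commute)
  hence r1: "real (tau (facets B)) \<le> real n / real (d + 2)" by (simp only: pos_le_divide_eq[OF pos])
  have "real ((d+2) * tau (facets K)) \<le> real (2 * n)" using tK' by (simp only: of_nat_le_iff)
  hence "real (tau (facets K)) * real (d + 2) \<le> 2 * real n"
    by (simp only: of_nat_mult mult.commute of_nat_numeral)
  hence r2: "real (tau (facets K)) \<le> 2 * real n / real (d + 2)" by (simp only: pos_le_divide_eq[OF pos])
  define p where "p x = (c x < 2)" for x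
  have A01: "{0, 1} \<subseteq> {..<d+2}" "card {0::nat, 1} \<ge> 2" by auto
  have A23: "{2, 3} \<subseteq> {..<d+2}" "card {2::nat, 3} \<ge> 2" using assms(1) by auto
  have "two_colorable (facets B)" unfolding two_colorable_def
  proof (intro exI[of _ p] ballI)
    fix e assume e: "e \<in> facets B"
    obtain x where "x \<in> e" "c x \<in> {0,1}" using hitB[OF e A01(1)] A01(2) by auto
    moreover obtain y where "y \<in> e" "c y \<in> {2,3}" using hitB[OF e A23(1)] A23(2) by auto
    ultimately have "x \<in> e" "y \<in> e" "p x \<noteq> p y" unfolding p_def by auto
    thus "\<exists>x\<in>e. \<exists>y\<in>e. p x \<noteq> p y" by blast
  qed
  moreover have "two_colorable (facets K)" unfolding two_colorable_def
  proof (intro exI[of _ p] ballI)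
    fix e assume e: "e \<in> facets K"
    obtain x where "x \<in> e" "c x \<in> {0,1}" using hitK[OF e A01(1)] A01(2) by auto
    moreover obtain y where "y \<in> e" "c y \<in> {2,3}" using hitK[OF e A23(1)] A23(2) by auto
    ultimately have "x \<in> e" "y \<in> e" "p x \<noteq> p y" unfolding p_def by auto
    thus "\<exists>x\<in>e. \<exists>y\<in>e. p x \<noteq> p y" by blast
  qed
  ultimately show ?thesis using r1 r2 by blast
qed

end
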